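(* For every formula $\varphi$ of the modal language $\mathcal{L}_m$, $\varphi$ is derivable in $\mathsf{WK}$ if and only if $\varphi^\tau$ is derivable in $\mathsf{ConstCK}$.
   Context: Language $\mathcal{L}$: formulas $\varphi ::= p \mid \bot \mid \varphi\wedge\varphi \mid \varphi\vee\varphi \mid \varphi\to\varphi \mid \varphi \mathrel{\Box\!\!\to} \varphi \mid \varphi \mathrel{\Diamond\!\!\to}\varphi$; $\neg\varphi:=\varphi\to\bot$, $\top:=\neg\bot$, $\varphi\leftrightarrow\psi:=(\varphi\to\psi)\wedge(\psi\to\varphi)$. Modal language $\mathcal{L}_m$: formulas $\varphi ::= p\mid\bot\mid\varphi\wedge\varphi\mid\varphi\vee\varphi\mid\varphi\to\varphi\mid\Box\varphi\mid\Diamond\varphi$. $\mathsf{ConstCK}$: any axiomatisation of intuitionistic propositional logic in $\mathcal{L}$ with modus ponens, plus axioms CM$_\Box$: $(\varphi\mathrel{\Box\!\!\to}\psi\wedge\chi)\to(\varphi\mathrel{\Box\!\!\to}\psi)\wedge(\varphi\mathrel{\Box\!\!\to}\chi)$; CC$_\Box$: $(\varphi\mathrel{\Box\!\!\to}\psi)\wedge(\varphi\mathrel{\Box\!\!\to}\chi)\to(\varphi\mathrel{\Box\!\!\to}\psi\wedge\chi)$; CN$_\Box$: $\varphi\mathrel{\Box\!\!\to}\top$; CN$_\Diamond$: $\neg(\varphi\mathrel{\Diamond\!\!\to}\bot)$; CK$_\Diamond$: $(\varphi\mathrel{\Box\!\!\to}(\psi\to\chi))\to((\varphi\mathrel{\Diamond\!\!\to}\psi)\to(\varphi\mathrel{\Diamond\!\!\to}\chi))$;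 rules RA$_\Box$: from $\varphi\leftrightarrow\rho$ infer $(\varphi\mathrel{\Box\!\!\to}\psi)\leftrightarrow(\rho\mathrel{\Box\!\!\to}\psi)$; RC$_\Box$: from $\psi\leftrightarrow\chi$ infer $(\varphi\mathrel{\Box\!\!\to}\psi)\leftrightarrow(\varphi\mathrel{\Box\!\!\to}\chi)$; RA$_\Diamond$, RC$_\Diamond$: the same with $\mathrel{\Diamond\!\!\to}$. $\mathsf{WK}$ (propositional fragment of Wijesekera's logic): intuitionistic propositional logic in $\mathcal{L}_m$ with modus ponens, plus the rule from $\varphi$ infer $\Box\varphi$, and axioms $\Box(\varphi\to\psi)\to(\Box\varphi\to\Box\psi)$, $\Box(\varphi\to\psi)\to(\Diamond\varphi\to\Diamond\psi)$, $\neg\Diamond\bot$. Translation $(\cdot)^\tau:\mathcal{L}_m\to\mathcal{L}$: $p^\tau=p$, $\bot^\tau=\bot$, $(\rho\circ\psi)^\tau=\rho^\tau\circ\psi^\tau$ for $\circ\in\{\wedge,\vee,\to\}$, $(\Box\psi)^\tau=\top\mathrel{\Box\!\!\to}\psi^\tau$, $(\Diamond\psi)^\tau=\top\mathrel{\Diamond\!\!\to}\psi^\tau$. *)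

theory Defs
  imports Main
begin

datatype 'a cfm =
    CAtom 'a
  | CBot
  | CAnd "'a cfm" "'a cfm"
  | COr "'a cfm" "'a cfm"
  | CImp "'a cfm" "'a cfm"
  | CBoxArr "'a cfm" "'a cfm"
  | CDiaArr "'a cfm" "'a cfm"

definition CNeg :: "'a cfm \<Rightarrow> 'a cfm" where "CNeg A = CImp A CBot"
definition CTop :: "'a cfm" where "CTop = CNeg CBot"
definition CIff :: "'a cfm \<Rightarrow> 'a cfm \<Rightarrow> 'a cfm" where
  "CIff A B = CAnd (CImp A B) (CImp B A)"

datatype 'a mfm =
    MAtom 'a
  | MBot
  | MAnd "'a mfm" "'a mfm"
  | MOr "'a mfm" "'a mfm"
  | MImp "'a mfm" "'a mfm"
  | MBox "'a mfm"
  | MDia "'a mfm"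

definition MNeg :: "'a mfm \<Rightarrow> 'a mfm" where "MNeg A = MImp A MBot"

inductive ConstCK :: "'a cfm \<Rightarrow> bool" where
  K:  "ConstCK (CImp A (CImp B A))"
| S:  "ConstCK (CImp (CImp A (CImp B C)) (CImp (CImp A B) (CImp A C)))"
| AndE1: "ConstCK (CImp (CAnd A B) A)"
| AndE2: "ConstCK (CImp (CAnd A B) B)"
| AndI: "ConstCK (CImp A (CImp B (CAnd A B)))"
| OrI1: "ConstCK (CImp A (COr A B))"
| OrI2: "ConstCK (CImp B (COr A B))"
| OrE: "ConstCK (CImp (CImp A C) (CImp (CImp B C) (CImp (COr A B) C)))"
| BotE: "ConstCK (CImp CBot A)"
| MP: "ConstCK (CImp A B) \<Longrightarrow> ConstCK A \<Longrightarrow> ConstCK B"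
| CMbox: "ConstCK (CImp (CBoxArr A (CAnd B C)) (CAnd (CBoxArr A B) (CBoxArr A C)))"
| CCbox: "ConstCK (CImp (CAnd (CBoxArr A B) (CBoxArr A C)) (CBoxArr A (CAnd B C)))"
| CNbox: "ConstCK (CBoxArr A CTop)"
| CNdia: "ConstCK (CNeg (CDiaArr A CBot))"
| CKdia: "ConstCK (CImp (CBoxArr A (CImp B C)) (CImp (CDiaArr A B) (CDiaArr A C)))"
| RAbox: "ConstCK (CIff A R) \<Longrightarrow> ConstCK (CIff (CBoxArr A B) (CBoxArr R B))"
| RCbox: "ConstCK (CIff B C) \<Longrightarrow> ConstCK (CIff (CBoxArr A B) (CBoxArr A C))"
| RAdia: "ConstCK (CIff A R) \<Longrightarrow> ConstCK (CIff (CDiaArr A B) (CDiaArr R B))"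
| RCdia: "ConstCK (CIff B C) \<Longrightarrow> ConstCK (CIff (CDiaArr A B) (CDiaArr A C))"

inductive WK :: "'a mfm \<Rightarrow> bool" where
  K:  "WK (MImp A (MImp B A))"
| S:  "WK (MImp (MImp A (MImp B C)) (MImp (MImp A B) (MImp A C)))"
| AndE1: "WK (MImp (MAnd A B) A)"
| AndE2: "WK (MImp (MAnd A B) B)"
| AndI: "WK (MImp A (MImp B (MAnd A B)))"
| OrI1: "WK (MImp A (MOr A B))"
| OrI2: "WK (MImp B (MOr A B))"
| OrE: "WK (MImp (MImp A C) (MImp (MImp B C) (MImp (MOr A B) C)))"
| BotE: "WK (MImp MBot A)"
| MP: "WK (MImp A B) \<Longrightarrow> WK A \<Longrightarrow> WK B"
| Nec: "WK A \<Longrightarrow> WK (MBox A)"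
| Kbox: "WK (MImp (MBox (MImp A B)) (MImp (MBox A) (MBox B)))"
| Kdia: "WK (MImp (MBox (MImp A B)) (MImp (MDia A) (MDia B)))"
| Ndia: "WK (MNeg (MDia MBot))"

primrec tau :: "'a mfm \<Rightarrow> 'a cfm" where
  "tau (MAtom p) = CAtom p"
| "tau MBot = CBot"
| "tau (MAnd A B) = CAnd (tau A) (tau B)"
| "tau (MOr A B) = COr (tau A) (tau B)"
| "tau (MImp A B) = CImp (tau A) (tau B)"
| "tau (MBox A) = CBoxArr CTop (tau A)"
| "tau (MDia A) = CDiaArr CTop (tau A)"

end

theory Submission
  imports Defs
begin

locale hil =
  fixes Pr :: "'f \<Rightarrow> bool" and Imp :: "'f \<Rightarrow> 'f \<Rightarrow> 'f" and Cj :: "'f \<Rightarrow> 'f \<Rightarrow> 'f"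
  assumes axK: "Pr (Imp A (Imp B A))"
    and axS: "Pr (Imp (Imp A (Imp B C)) (Imp (Imp A B) (Imp A C)))"
    and axE1: "Pr (Imp (Cj A B) A)"
    and axE2: "Pr (Imp (Cj A B) B)"
    and axI: "Pr (Imp A (Imp B (Cj A B)))"
    and mp: "Pr (Imp A B) \<Longrightarrow> Pr A \<Longrightarrow> Pr B"
begin

lemma idt: "Pr (Imp A A)"
  by (rule mp[OF mp[OF axS[of A "Imp A A" A] axK] axK])

lemma lift: "Pr B \<Longrightarrow> Pr (Imp A B)"
  by (rule mp[OF axK])

lemma mpu: "Pr (Imp X (Imp U V)) \<Longrightarrow> Pr (Imp X U) \<Longrightarrow> Pr (Imp X V)"
  by (rule mp[OF mp[OF axS]])

lemma trans: "Pr (Imp A B) \<Longrightarrow> Pr (Imp B C) \<Longrightarrow> Pr (Imp A C)"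
  by (rule mpu[OF lift])

lemma conjI: "Pr A \<Longrightarrow> Pr B \<Longrightarrow> Pr (Cj A B)"
  by (rule mp[OF mp[OF axI]])

lemma conjD1: "Pr (Cj A B) \<Longrightarrow> Pr A" by (rule mp[OF axE1])
lemma conjD2: "Pr (Cj A B) \<Longrightarrow> Pr B" by (rule mp[OF axE2])

lemma conj_under: "Pr (Imp X Y) \<Longrightarrow> Pr (Imp X Z) \<Longrightarrow> Pr (Imp X (Cj Y Z))"
  by (rule mpu[OF mpu[OF lift[OF axI]]])

lemma uncurry: "Pr (Imp P (Imp Q R)) \<Longrightarrow> Pr (Imp (Cj P Q) R)"
  by (rule mpu[OF trans[OF axE1] axE2])

lemma curry: "Pr (Imp (Cj P Q) R) \<Longrightarrow> Pr (Imp P (Imp Q R))"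
proof -
  assume h: "Pr (Imp (Cj P Q) R)"
  have 1: "Pr (Imp P (Imp Q (Cj P Q)))" by (rule axI)
  have 2: "Pr (Imp P (Imp Q (Imp (Cj P Q) R)))" by (rule lift[OF lift[OF h]])
  show ?thesis by (rule mpu[OF mpu[OF lift[OF axS] 2] 1])
qed

lemma modus: "Pr (Imp (Cj (Imp A B) A) B)"
  by (rule uncurry[OF idt])

end

interpretation C: hil ConstCK CImp CAnd
  apply unfold_locales
       apply (rule ConstCK.K)
      apply (rule ConstCK.S)
     apply (rule ConstCK.AndE1)
    apply (rule ConstCK.AndE2)
   apply (rule ConstCK.AndI)
  apply (erule (1) ConstCK.MP)
  done

interpretation W: hil WK MImp MAnd
  apply unfold_locales
       apply (rule WK.K)
      apply (rule WK.S)
     apply (rule WK.AndE1)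
    apply (rule WK.AndE2)
   apply (rule WK.AndI)
  apply (erule (1) WK.MP)
  done

lemma C_mono: "ConstCK (CImp X Y) \<Longrightarrow> ConstCK (CImp (CBoxArr A X) (CBoxArr A Y))"
proof -
  assume h: "ConstCK (CImp X Y)"
  have "ConstCK (CIff X (CAnd X Y))" unfolding CIff_def
    by (rule C.conjI[OF C.conj_under[OF C.idt h] C.axE1])
  then have "ConstCK (CIff (CBoxArr A X) (CBoxArr A (CAnd X Y)))" by (rule ConstCK.RCbox)
  then have "ConstCK (CImp (CBoxArr A X) (CBoxArr A (CAnd X Y)))" unfolding CIff_def
    by (rule C.conjD1)
  then show ?thesis by (rule C.trans[OF C.trans[OF _ ConstCK.CMbox] C.axE2])
qed

lemma forward: "WK \<phi> \<Longrightarrow> ConstCK (tau \<phi>)"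
proof (induction rule: WK.induct)
  case (MP A B) then show ?case by (auto intro: ConstCK.MP)
next
  case (Nec A)
  have t: "ConstCK CTop" unfolding CTop_def CNeg_def by (rule C.idt)
  have "ConstCK (CIff CTop (tau A))" unfolding CIff_def
    by (rule C.conjI[OF C.lift[OF Nec.IH] C.lift[OF t]])
  then have "ConstCK (CIff (CBoxArr CTop CTop) (CBoxArr CTop (tau A)))" by (rule ConstCK.RCbox)
  then have "ConstCK (CImp (CBoxArr CTop CTop) (CBoxArr CTop (tau A)))" unfolding CIff_def
    by (rule C.conjD1)
  then show ?case using ConstCK.CNbox by (auto intro: ConstCK.MP)
next
  case (Kbox A B)
  show ?case by simp (rule C.curry[OF C.trans[OF ConstCK.CCbox C_mono[OF C.modus]]])
next
  case (Kdia A B) show ?case by (simp add: ConstCK.CKdia)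
next
  case Ndia show ?case using ConstCK.CNdia[of CTop] by (simp add: MNeg_def CNeg_def)
qed (auto intro: ConstCK.intros)

primrec untau :: "'a cfm \<Rightarrow> 'a mfm" where
  "untau (CAtom p) = MAtom p"
| "untau CBot = MBot"
| "untau (CAnd A B) = MAnd (untau A) (untau B)"
| "untau (COr A B) = MOr (untau A) (untau B)"
| "untau (CImp A B) = MImp (untau A) (untau B)"
| "untau (CBoxArr A B) = MBox (untau B)"
| "untau (CDiaArr A B) = MDia (untau B)"

lemma untau_tau: "untau (tau \<phi>) = \<phi>"
  by (induction \<phi>) auto

lemma W_box_mono: "WK (MImp X Y) \<Longrightarrow> WK (MImp (MBox X) (MBox Y))"
  by (rule WK.MP[OF WK.Kbox WK.Nec])

lemma W_dia_mono: "WK (MImp X Y) \<Longrightarrow> WK (MImp (MDia X) (MDia Y))"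
  by (rule WK.MP[OF WK.Kdia WK.Nec])

lemma backward: "ConstCK \<psi> \<Longrightarrow> WK (untau \<psi>)"
proof (induction rule: ConstCK.induct)
  case (MP A B) then show ?case by (auto intro: WK.MP)
next
  case (CMbox A B C)
  show ?case by simp (rule W.conj_under[OF W_box_mono[OF W.axE1] W_box_mono[OF W.axE2]])
next
  case (CCbox A B C)
  show ?case by simp (rule W.uncurry[OF W.trans[OF W_box_mono[OF W.axI] WK.Kbox]])
next
  case (CNbox A)
  show ?case unfolding CTop_def CNeg_def by simp (rule WK.Nec[OF W.idt])
next
  case (CNdia A)
  show ?case using WK.Ndia by (simp add: MNeg_def CNeg_def)
next
  case (CKdia A B C) show ?case by (simp add: WK.Kdia)
next
  case (RAbox A R B) show ?case unfolding CIff_def by simp (rule W.conjI[OF W.idt W.idt])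
next
  case (RAdia A R B) show ?case unfolding CIff_def by simp (rule W.conjI[OF W.idt W.idt])
next
  case (RCbox B C A)
  then have "WK (MAnd (MImp (untau B) (untau C)) (MImp (untau C) (untau B)))"
    by (simp add: CIff_def)
  then show ?case unfolding CIff_def
    by simp (rule W.conjI[OF W_box_mono[OF W.conjD1] W_box_mono[OF W.conjD2]])
next
  case (RCdia B C A)
  then have "WK (MAnd (MImp (untau B) (untau C)) (MImp (untau C) (untau B)))"
    by (simp add: CIff_def)
  then show ?case unfolding CIff_def
    by simp (rule W.conjI[OF W_dia_mono[OF W.conjD1] W_dia_mono[OF W.conjD2]])
qed (auto intro: WK.intros)

theorem theorem8:
  fixes \<phi> :: "'a mfm"
  shows "WK \<phi> \<longleftrightarrow> ConstCK (tau \<phi>)"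
  using forward backward[of "tau \<phi>"] by (auto simp: untau_tau)

end
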